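(* Let $n\ge 2$ and $\alpha\in(0,2]$. Define the $n$-qubit observables $\mathcal{M}_Z=(|0\rangle\langle 0|)^{\otimes n}+(|1\rangle\langle 1|)^{\otimes n}$ and $\mathcal{M}_X=\sigma_x^{\otimes n}$, where $\sigma_x=|0\rangle\langle 1|+|1\rangle\langle 0|$. Then for every biseparable $n$-qubit state $\rho$, $$\alpha\operatorname{Tr}[\rho\,\mathcal{M}_Z]\pm\operatorname{Tr}[\rho\,\mathcal{M}_X]\le \frac{\alpha}{2}+1$$ for both choices of sign.
   Context: $\{|0\rangle,|1\rangle\}$ is the computational basis of $\mathbb{C}^2$. An $n$-qubit pure state is biseparable if the $n$ qubits can be split into two nonempty disjoint subsets such that the state is a tensor product of a pure state on the first subset and a pure state on the second. A mixed $n$-qubit state is biseparable if it is a convex combination of projectors onto biseparable pure states (the bipartitions may differ between terms). *)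

theory Defs
  imports Complex_Main
begin

text \<open>Qubits are labelled 0..n-1. A computational basis state of a set A of qubits
 is an assignment x :: nat \<Rightarrow> bool vanishing outside A (False = |0>, True = |1>).\<close>

definition asg :: "nat set \<Rightarrow> (nat \<Rightarrow> bool) set" where
  "asg A = {x. \<forall>i. i \<notin> A \<longrightarrow> \<not> x i}"

definition restr :: "(nat \<Rightarrow> bool) \<Rightarrow> nat set \<Rightarrow> (nat \<Rightarrow> bool)" where
  "restr x A = (\<lambda>i. if i \<in> A then x i else False)"

definition pure_state_on :: "nat set \<Rightarrow> ((nat \<Rightarrow> bool) \<Rightarrow> complex) \<Rightarrow> bool" where
  "pure_state_on A \<psi> \<longleftrightarrow> (\<Sum>x\<in>asg A. (cmod (\<psi> x))\<^sup>2) = 1"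

definition biseparable_pure :: "nat \<Rightarrow> ((nat \<Rightarrow> bool) \<Rightarrow> complex) \<Rightarrow> bool" where
  "biseparable_pure n \<psi> \<longleftrightarrow> pure_state_on {..<n} \<psi> \<and>
     (\<exists>S \<phi> \<chi>. S \<subseteq> {..<n} \<and> S \<noteq> {} \<and> S \<noteq> {..<n} \<and>
        pure_state_on S \<phi> \<and> pure_state_on ({..<n} - S) \<chi> \<and>
        (\<forall>x\<in>asg {..<n}. \<psi> x = \<phi> (restr x S) * \<chi> (restr x ({..<n} - S))))"

text \<open>Density matrices as matrix-entry functions on the basis asg {..<n}.
 A mixed state is biseparable if it is a finite convex combination of projectors
 onto biseparable pure states.\<close>
definition biseparable :: "nat \<Rightarrow> ((nat \<Rightarrow> bool) \<Rightarrow> (nat \<Rightarrow> bool) \<Rightarrow> complex) \<Rightarrow> bool" where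
  "biseparable n \<rho> \<longleftrightarrow> (\<exists>m (p :: nat \<Rightarrow> real) \<psi>.
     (\<forall>k<m. p k \<ge> 0) \<and> (\<Sum>k<m. p k) = 1 \<and> (\<forall>k<m. biseparable_pure n (\<psi> k)) \<and>
     (\<forall>x\<in>asg {..<n}. \<forall>y\<in>asg {..<n}.
        \<rho> x y = (\<Sum>k<m. complex_of_real (p k) * \<psi> k x * cnj (\<psi> k y))))"

definition trace_prod :: "nat \<Rightarrow> ((nat \<Rightarrow> bool) \<Rightarrow> (nat \<Rightarrow> bool) \<Rightarrow> complex)
     \<Rightarrow> ((nat \<Rightarrow> bool) \<Rightarrow> (nat \<Rightarrow> bool) \<Rightarrow> complex) \<Rightarrow> complex" where
  "trace_prod n \<rho> M = (\<Sum>x\<in>asg {..<n}. \<Sum>y\<in>asg {..<n}. \<rho> x y * M y x)"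

text \<open>n-fold tensor power of a single-qubit operator A (entries A a b = <a|A|b>).\<close>
definition tensor_pow :: "nat \<Rightarrow> (bool \<Rightarrow> bool \<Rightarrow> complex) \<Rightarrow> (nat \<Rightarrow> bool) \<Rightarrow> (nat \<Rightarrow> bool) \<Rightarrow> complex" where
  "tensor_pow n A x y = (\<Prod>i<n. A (x i) (y i))"

definition proj0 :: "bool \<Rightarrow> bool \<Rightarrow> complex" where
  "proj0 a b = (if \<not> a \<and> \<not> b then 1 else 0)"

definition proj1 :: "bool \<Rightarrow> bool \<Rightarrow> complex" where
  "proj1 a b = (if a \<and> b then 1 else 0)"

definition sigma_x :: "bool \<Rightarrow> bool \<Rightarrow> complex" where
  "sigma_x a b = (if a \<noteq> b then 1 else 0)"

definition M_Z :: "nat \<Rightarrow> (nat \<Rightarrow> bool) \<Rightarrow> (nat \<Rightarrow> bool) \<Rightarrow> complex" where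
  "M_Z n x y = tensor_pow n proj0 x y + tensor_pow n proj1 x y"

definition M_X :: "nat \<Rightarrow> (nat \<Rightarrow> bool) \<Rightarrow> (nat \<Rightarrow> bool) \<Rightarrow> complex" where
  "M_X n x y = tensor_pow n sigma_x x y"

end

theory Submission
  imports Defs
begin


lemma real_final:
  fixes p q a b X \<alpha> s :: real
  assumes "p\<ge>0" "q\<ge>0" "a\<ge>0" "b\<ge>0" "p\<^sup>2+q\<^sup>2 \<le> 1" "a\<^sup>2+b\<^sup>2\<le>1"
    "\<bar>X\<bar> \<le> (2*p*q + (1-p\<^sup>2-q\<^sup>2))*(2*a*b+(1-a\<^sup>2-b\<^sup>2))"
    "0<\<alpha>" "\<alpha>\<le>2" "s=1 \<or> s=-1"
  shows "\<alpha>*(p\<^sup>2*a\<^sup>2+q\<^sup>2*b\<^sup>2) + s*X \<le> \<alpha>/2+1"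
proof -
  define d1 where "d1 = p\<^sup>2-q\<^sup>2"
  define w1 where "w1 = 2*p*q + (1-p\<^sup>2-q\<^sup>2)"
  define d2 where "d2 = a\<^sup>2-b\<^sup>2"
  define w2 where "w2 = 2*a*b + (1-a\<^sup>2-b\<^sup>2)"
  have w1: "w1 \<ge> 0" using assms unfolding w1_def by (simp add: mult_nonneg_nonneg)
  have w2: "w2 \<ge> 0" using assms unfolding w2_def by (simp add: mult_nonneg_nonneg)
  have e1: "d1\<^sup>2+w1\<^sup>2 \<le> 1"
  proof -
    have "0 \<le> (1-p\<^sup>2-q\<^sup>2) * (p-q)\<^sup>2" using assms by simp
    moreover have "1 - (d1\<^sup>2+w1\<^sup>2) = 2*((1-p\<^sup>2-q\<^sup>2) * (p-q)\<^sup>2)"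
      unfolding d1_def w1_def by (simp add: power2_eq_square algebra_simps)
    ultimately show ?thesis by linarith
  qed
  have e2: "d2\<^sup>2+w2\<^sup>2 \<le> 1"
  proof -
    have "0 \<le> (1-a\<^sup>2-b\<^sup>2) * (a-b)\<^sup>2" using assms by simp
    moreover have "1 - (d2\<^sup>2+w2\<^sup>2) = 2*((1-a\<^sup>2-b\<^sup>2) * (a-b)\<^sup>2)"
      unfolding d2_def w2_def by (simp add: power2_eq_square algebra_simps)
    ultimately show ?thesis by linarith
  qed
  have Z: "p\<^sup>2*a\<^sup>2+q\<^sup>2*b\<^sup>2 = ((p\<^sup>2+q\<^sup>2)*(a\<^sup>2+b\<^sup>2) + d1*d2)/2"
    unfolding d1_def d2_def by (simp add: algebra_simps)
  have PQ: "(p\<^sup>2+q\<^sup>2)*(a\<^sup>2+b\<^sup>2) \<le> 1" using assms by (simp add: mult_le_one)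
  have A1: "\<alpha>*((p\<^sup>2+q\<^sup>2)*(a\<^sup>2+b\<^sup>2)) \<le> \<alpha>" using PQ assms by simp
  have A2: "\<alpha>*(d1*d2) \<le> 2*\<bar>d1*d2\<bar>"
  proof (cases "d1*d2 \<ge> 0")
    case True then show ?thesis using assms by (simp add: mult_right_mono)
  next
    case False
    then have "\<alpha>*(d1*d2) < 0" using assms(8) by (simp add: mult_pos_neg)
    then show ?thesis by linarith
  qed
  have A3: "\<bar>d1*d2\<bar> + w1*w2 \<le> 1"
  proof -
    have "\<bar>d1*d2\<bar> = \<bar>d1\<bar>*\<bar>d2\<bar>" by (simp add: abs_mult)
    moreover have "2*(\<bar>d1\<bar>*\<bar>d2\<bar>) \<le> d1\<^sup>2 + d2\<^sup>2"
      using sum_squares_bound[of "\<bar>d1\<bar>" "\<bar>d2\<bar>"] by (simp add: power2_eq_square)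
    moreover have "2*(w1*w2) \<le> w1\<^sup>2 + w2\<^sup>2"
      using sum_squares_bound[of w1 w2] by (simp add: power2_eq_square)
    ultimately show ?thesis using e1 e2 by linarith
  qed
  have sX: "s*X \<le> \<bar>X\<bar>" using assms(10) by auto
  have "\<bar>X\<bar> \<le> w1*w2" using assms(7) unfolding w1_def w2_def .
  moreover have "\<alpha>*(p\<^sup>2*a\<^sup>2+q\<^sup>2*b\<^sup>2) = (\<alpha>*((p\<^sup>2+q\<^sup>2)*(a\<^sup>2+b\<^sup>2)) + \<alpha>*(d1*d2))/2"
    unfolding Z by (simp add: algebra_simps)
  ultimately show ?thesis using A1 A2 A3 sX by argo
qed



definition zer :: "nat \<Rightarrow> bool" where "zer = (\<lambda>_. False)"
definition ones :: "nat set \<Rightarrow> nat \<Rightarrow> bool" where "ones A = (\<lambda>i. i \<in> A)"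
definition comp :: "nat set \<Rightarrow> (nat \<Rightarrow> bool) \<Rightarrow> nat \<Rightarrow> bool" where "comp A x = (\<lambda>i. i \<in> A \<and> \<not> x i)"

lemma finite_asg: "finite A \<Longrightarrow> finite (asg A)"
proof -
  assume f: "finite A"
  have "asg A \<subseteq> (\<lambda>B i. i \<in> B) ` Pow A"
  proof
    fix x assume "x \<in> asg A"
    then have "x = (\<lambda>i. i \<in> {i. x i})" "{i. x i} \<in> Pow A" by (auto simp: asg_def)
    then show "x \<in> (\<lambda>B i. i \<in> B) ` Pow A" by blast
  qed
  then show ?thesis using f finite_subset by blast
qed

lemma zer_asg[simp]: "zer \<in> asg A" by (simp add: zer_def asg_def)
lemma ones_asg[simp]: "ones A \<in> asg A" by (simp add: ones_def asg_def)
lemma comp_asg[simp]: "comp A x \<in> asg A" by (simp add: comp_def asg_def)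
lemma comp_comp[simp]: "x \<in> asg A \<Longrightarrow> comp A (comp A x) = x"
  by (auto simp: comp_def asg_def fun_eq_iff)
lemma comp_zer[simp]: "comp A zer = ones A" by (simp add: comp_def zer_def ones_def)
lemma comp_ones[simp]: "comp A (ones A) = zer" by (simp add: comp_def zer_def ones_def)
lemma zer_ones: "A \<noteq> {} \<Longrightarrow> zer \<noteq> ones A" by (auto simp: zer_def ones_def fun_eq_iff)

lemma restr_asg[simp]: "restr x A \<in> asg A" by (simp add: restr_def asg_def)

lemma factor_sum:
  fixes f g :: "(nat \<Rightarrow> bool) \<Rightarrow> complex"
  assumes "finite N" "S \<subseteq> N"
  shows "(\<Sum>x\<in>asg N. f (restr x S) * g (restr x (N - S))) = (\<Sum>u\<in>asg S. f u) * (\<Sum>v\<in>asg (N-S). g v)"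
proof -
  have fS: "finite (asg S)" using assms finite_asg finite_subset by blast
  have fT: "finite (asg (N-S))" using assms finite_asg by blast
  have "(\<Sum>u\<in>asg S. f u) * (\<Sum>v\<in>asg (N-S). g v) = (\<Sum>(u,v)\<in>asg S \<times> asg (N-S). f u * g v)"
    by (simp add: sum_product sum.cartesian_product)
  also have "\<dots> = (\<Sum>x\<in>asg N. f (restr x S) * g (restr x (N - S)))"
  proof (rule sum.reindex_bij_witness[where i="\<lambda>x. (restr x S, restr x (N-S))" and j="\<lambda>(u,v) i. u i \<or> v i"])
    fix a assume "a \<in> asg S \<times> asg (N - S)"
    then show "(restr ((\<lambda>(u, v) i. u i \<or> v i) a) S, restr ((\<lambda>(u, v) i. u i \<or> v i) a) (N - S)) = a"
      by (auto simp: asg_def restr_def fun_eq_iff)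
  next
    fix a assume "a \<in> asg S \<times> asg (N - S)"
    then show "(\<lambda>(u, v) i. u i \<or> v i) a \<in> asg N" using assms(2) by (auto simp: asg_def)
  next
    fix b assume "b \<in> asg N"
    then show "(\<lambda>(u, v) i. u i \<or> v i) (restr b S, restr b (N - S)) = b"
      by (auto simp: asg_def restr_def fun_eq_iff)
  next
    fix b assume "b \<in> asg N"
    then show "(restr b S, restr b (N - S)) \<in> asg S \<times> asg (N - S)" by simp
  next
    fix a assume a: "a \<in> asg S \<times> asg (N - S)"
    obtain u v where "a = (u,v)" by force
    moreover have "restr (\<lambda>i. u i \<or> v i) S = u" "restr (\<lambda>i. u i \<or> v i) (N-S) = v"
      using a calculation by (auto simp: asg_def restr_def fun_eq_iff)
    ultimately show "f (restr ((\<lambda>(u, v) i. u i \<or> v i) a) S) * g (restr ((\<lambda>(u, v) i. u i \<or> v i) a) (N - S)) = (case a of (u, v) \<Rightarrow> f u * g v)" by simp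
  qed
  finally show ?thesis by simp
qed

lemma single_bound:
  fixes f :: "(nat \<Rightarrow> bool) \<Rightarrow> complex"
  assumes fin: "finite A" and ne: "A \<noteq> {}"
  shows "cmod (\<Sum>u\<in>asg A. f u * cnj (f (comp A u)))
     \<le> 2 * cmod (f zer) * cmod (f (ones A)) + ((\<Sum>u\<in>asg A. (cmod (f u))\<^sup>2) - (cmod (f zer))\<^sup>2 - (cmod (f (ones A)))\<^sup>2)"
proof -
  let ?U = "asg A" let ?z = zer let ?o = "ones A"
  define R where "R = ?U - {?z, ?o}"
  have fU: "finite ?U" using fin finite_asg by blast
  have fR: "finite R" using fU R_def by simp
  have zo: "?z \<noteq> ?o" using zer_ones[OF ne] .
  have U: "?U = insert ?z (insert ?o R)" using R_def by auto
  have nz: "?z \<notin> insert ?o R" using zo R_def by auto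
  have no: "?o \<notin> R" using R_def by auto
  define h where "h u = f u * cnj (f (comp A u))" for u
  have sU: "(\<Sum>u\<in>?U. h u) = h ?z + h ?o + (\<Sum>u\<in>R. h u)"
    unfolding U using fR nz no by (simp add: add.assoc)
  have nU: "(\<Sum>u\<in>?U. (cmod (f u))\<^sup>2) = (cmod (f ?z))\<^sup>2 + (cmod (f ?o))\<^sup>2 + (\<Sum>u\<in>R. (cmod (f u))\<^sup>2)"
    unfolding U using fR nz no by (simp add: add.assoc)
  have hz: "cmod (h ?z + h ?o) \<le> 2 * cmod (f ?z) * cmod (f ?o)"
  proof -
    have "cmod (h ?z + h ?o) \<le> cmod (h ?z) + cmod (h ?o)" by (rule norm_triangle_ineq)
    also have "\<dots> = 2 * cmod (f ?z) * cmod (f ?o)" by (simp add: h_def norm_mult)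
    finally show ?thesis .
  qed
  have cR: "u \<in> R \<Longrightarrow> comp A u \<in> R" for u
  proof -
    assume u: "u \<in> R"
    then have uU: "u \<in> ?U" by (simp add: R_def)
    have "comp A u \<noteq> ?z"
    proof
      assume "comp A u = ?z" then have "comp A (comp A u) = ?o" by simp
      then show False using u uU by (simp add: R_def)
    qed
    moreover have "comp A u \<noteq> ?o"
    proof
      assume "comp A u = ?o" then have "comp A (comp A u) = ?z" by simp
      then show False using u uU by (simp add: R_def)
    qed
    ultimately show ?thesis by (simp add: R_def)
  qed
  have swap: "(\<Sum>u\<in>R. (cmod (f (comp A u)))\<^sup>2) = (\<Sum>u\<in>R. (cmod (f u))\<^sup>2)"
  proof (rule sum.reindex_bij_witness[where i="comp A" and j="comp A"])
    fix a assume "a \<in> R" then show "comp A (comp A a) = a" by (simp add: R_def)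
  next
    fix a assume "a \<in> R" then show "comp A a \<in> R" by (rule cR)
  next
    fix a assume "a \<in> R" then show "comp A (comp A a) = a" by (simp add: R_def)
  next
    fix a assume "a \<in> R" then show "comp A a \<in> R" by (rule cR)
  next
    fix a assume "a \<in> R" then show "(cmod (f (comp A a)))\<^sup>2 = (cmod (f (comp A a)))\<^sup>2" by simp
  qed
  have hR: "cmod (\<Sum>u\<in>R. h u) \<le> (\<Sum>u\<in>R. (cmod (f u))\<^sup>2)"
  proof -
    have "cmod (\<Sum>u\<in>R. h u) \<le> (\<Sum>u\<in>R. cmod (h u))" by (rule norm_sum)
    also have "\<dots> \<le> (\<Sum>u\<in>R. ((cmod (f u))\<^sup>2 + (cmod (f (comp A u)))\<^sup>2)/2)"
    proof (rule sum_mono)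
      fix u
      have "2 * (cmod (f u) * cmod (f (comp A u))) \<le> (cmod (f u))\<^sup>2 + (cmod (f (comp A u)))\<^sup>2"
        using sum_squares_bound[of "cmod (f u)" "cmod (f (comp A u))"] by (simp add: power2_eq_square)
      then show "cmod (h u) \<le> ((cmod (f u))\<^sup>2 + (cmod (f (comp A u)))\<^sup>2)/2"
        by (simp add: h_def norm_mult)
    qed
    also have "\<dots> = (\<Sum>u\<in>R. (cmod (f u))\<^sup>2)"
      by (simp add: sum_divide_distrib[symmetric] sum.distrib swap)
    finally show ?thesis .
  qed
  have "cmod (\<Sum>u\<in>?U. h u) \<le> cmod (h ?z + h ?o) + cmod (\<Sum>u\<in>R. h u)"
    unfolding sU by (rule norm_triangle_ineq)
  then show ?thesis using hz hR nU unfolding h_def by linarith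
qed


lemma two_le:
  fixes f :: "(nat \<Rightarrow> bool) \<Rightarrow> complex"
  assumes "finite A" "A \<noteq> {}"
  shows "(cmod (f zer))\<^sup>2 + (cmod (f (ones A)))\<^sup>2 \<le> (\<Sum>u\<in>asg A. (cmod (f u))\<^sup>2)"
proof -
  have "(\<Sum>u\<in>{zer, ones A}. (cmod (f u))\<^sup>2) \<le> (\<Sum>u\<in>asg A. (cmod (f u))\<^sup>2)"
    by (rule sum_mono2) (use assms finite_asg in auto)
  then show ?thesis using zer_ones[OF assms(2)] by simp
qed

lemma restr_zer[simp]: "restr zer A = zer" by (simp add: restr_def zer_def)
lemma restr_ones: "S \<subseteq> N \<Longrightarrow> restr (ones N) S = ones S" by (auto simp: restr_def ones_def fun_eq_iff)
lemma restr_comp: "S \<subseteq> N \<Longrightarrow> restr (comp N x) S = comp S (restr x S)"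
  by (auto simp: restr_def comp_def fun_eq_iff)

lemma pure_bound:
  assumes bp: "biseparable_pure n \<psi>" and "0<\<alpha>" "\<alpha>\<le>2" "s=1\<or>s=-1"
  shows "\<alpha>*((cmod (\<psi> zer))\<^sup>2 + (cmod (\<psi> (ones {..<n})))\<^sup>2)
     + s*Re(\<Sum>x\<in>asg {..<n}. \<psi> x * cnj (\<psi> (comp {..<n} x))) \<le> \<alpha>/2+1"
proof -
  let ?N = "{..<n::nat}"
  obtain S \<phi> \<chi> where S: "S \<subseteq> ?N" "S \<noteq> {}" "S \<noteq> ?N" and ps: "pure_state_on S \<phi>"
    and pt: "pure_state_on (?N - S) \<chi>"
    and fac: "\<forall>x\<in>asg ?N. \<psi> x = \<phi> (restr x S) * \<chi> (restr x (?N - S))"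
    using bp unfolding biseparable_pure_def by blast
  define T where "T = ?N - S"
  have T: "T \<subseteq> ?N" "T \<noteq> {}" using S unfolding T_def by auto
  have fS: "finite S" using S finite_subset by blast
  have fT: "finite T" using T_def by simp
  have sS: "(\<Sum>u\<in>asg S. (cmod (\<phi> u))\<^sup>2) = 1" using ps by (simp add: pure_state_on_def)
  have sT: "(\<Sum>u\<in>asg T. (cmod (\<chi> u))\<^sup>2) = 1" using pt by (simp add: pure_state_on_def T_def)
  have fac': "\<And>x. x \<in> asg ?N \<Longrightarrow> \<psi> x = \<phi> (restr x S) * \<chi> (restr x T)"
    using fac T_def by simp
  have z: "\<psi> zer = \<phi> zer * \<chi> zer" using fac'[of zer] by simp
  have o: "\<psi> (ones ?N) = \<phi> (ones S) * \<chi> (ones T)"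
    using fac'[of "ones ?N"] restr_ones[OF S(1)] restr_ones[OF T(1)] by simp
  define F where "F u = \<phi> u * cnj (\<phi> (comp S u))" for u
  define G where "G u = \<chi> u * cnj (\<chi> (comp T u))" for u
  have XX: "(\<Sum>x\<in>asg ?N. \<psi> x * cnj (\<psi> (comp ?N x))) = (\<Sum>x\<in>asg ?N. F (restr x S) * G (restr x (?N - S)))"
  proof (rule sum.cong)
    fix x assume x: "x \<in> asg ?N"
    show "\<psi> x * cnj (\<psi> (comp ?N x)) = F (restr x S) * G (restr x (?N - S))"
      using fac'[OF x] fac'[of "comp ?N x"] restr_comp[OF S(1)] restr_comp[OF T(1)]
      by (simp add: F_def G_def T_def)
  qed simp
  also have "\<dots> = (\<Sum>u\<in>asg S. F u) * (\<Sum>v\<in>asg T. G v)"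
    using factor_sum[of ?N S F G] S(1) T_def by simp
  finally have XX: "(\<Sum>x\<in>asg ?N. \<psi> x * cnj (\<psi> (comp ?N x))) = (\<Sum>u\<in>asg S. F u) * (\<Sum>v\<in>asg T. G v)" .
  define p where "p = cmod (\<phi> zer)"
  define q where "q = cmod (\<phi> (ones S))"
  define a where "a = cmod (\<chi> zer)"
  define b where "b = cmod (\<chi> (ones T))"
  have bS: "cmod (\<Sum>u\<in>asg S. F u) \<le> 2*p*q + (1-p\<^sup>2-q\<^sup>2)"
    using single_bound[OF fS S(2), of \<phi>] sS unfolding F_def p_def q_def by simp
  have bT: "cmod (\<Sum>u\<in>asg T. G u) \<le> 2*a*b + (1-a\<^sup>2-b\<^sup>2)"
    using single_bound[OF fT T(2), of \<chi>] sT unfolding G_def a_def b_def by simp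
  have pq: "p\<^sup>2+q\<^sup>2 \<le> 1" using two_le[OF fS S(2), of \<phi>] sS unfolding p_def q_def by simp
  have ab: "a\<^sup>2+b\<^sup>2 \<le> 1" using two_le[OF fT T(2), of \<chi>] sT unfolding a_def b_def by simp
  define X where "X = Re(\<Sum>x\<in>asg ?N. \<psi> x * cnj (\<psi> (comp ?N x)))"
  have "\<bar>X\<bar> \<le> cmod (\<Sum>u\<in>asg S. F u) * cmod (\<Sum>v\<in>asg T. G v)"
    unfolding X_def XX norm_mult[symmetric] by (rule abs_Re_le_cmod)
  also have "\<dots> \<le> (2*p*q + (1-p\<^sup>2-q\<^sup>2)) * (2*a*b + (1-a\<^sup>2-b\<^sup>2))"
    by (rule mult_mono[OF bS bT]) (use order_trans[OF norm_ge_zero bS] in auto)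
  finally have Xb: "\<bar>X\<bar> \<le> (2*p*q + (1-p\<^sup>2-q\<^sup>2)) * (2*a*b + (1-a\<^sup>2-b\<^sup>2))" .
  have Z: "(cmod (\<psi> zer))\<^sup>2 + (cmod (\<psi> (ones ?N)))\<^sup>2 = p\<^sup>2*a\<^sup>2+q\<^sup>2*b\<^sup>2"
    unfolding z o p_def q_def a_def b_def by (simp add: norm_mult power_mult_distrib)
  show ?thesis unfolding Z X_def[symmetric]
    by (rule real_final) (use assms pq ab Xb in \<open>auto simp: p_def q_def a_def b_def\<close>)
qed


lemma prod01:
  fixes A :: "bool \<Rightarrow> bool \<Rightarrow> complex" and x y :: "nat \<Rightarrow> bool" and n :: nat
  assumes "\<And>a b. A a b = (if P a b then 1 else 0)"
  shows "(\<Prod>i<n. A (y i) (x i)) = (if \<forall>i<n. P (y i) (x i) then 1 else 0)"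
proof (induction n)
  case 0 then show ?case by simp
next
  case (Suc n) then show ?case by (auto simp: assms less_Suc_eq)
qed

lemma MZ_val:
  assumes "x \<in> asg {..<n}" "y \<in> asg {..<n}"
  shows "M_Z n y x = (if y = zer \<and> x = zer then 1 else 0) + (if y = ones {..<n} \<and> x = ones {..<n} then 1 else 0)"
proof -
  have "tensor_pow n proj0 y x = (if \<forall>i<n. \<not> y i \<and> \<not> x i then 1 else 0)"
    unfolding tensor_pow_def by (rule prod01) (simp add: proj0_def)
  moreover have "(\<forall>i<n. \<not> y i \<and> \<not> x i) \<longleftrightarrow> y = zer \<and> x = zer"
    using assms by (auto simp: asg_def zer_def fun_eq_iff)
  moreover have "tensor_pow n proj1 y x = (if \<forall>i<n. y i \<and> x i then 1 else 0)"
    unfolding tensor_pow_def by (rule prod01) (simp add: proj1_def)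
  moreover have "(\<forall>i<n. y i \<and> x i) \<longleftrightarrow> y = ones {..<n} \<and> x = ones {..<n}"
    using assms by (auto simp: asg_def ones_def fun_eq_iff)
  ultimately show ?thesis by (simp add: M_Z_def)
qed

lemma MX_val:
  assumes "x \<in> asg {..<n}" "y \<in> asg {..<n}"
  shows "M_X n y x = (if y = comp {..<n} x then 1 else 0)"
proof -
  have "tensor_pow n sigma_x y x = (if \<forall>i<n. y i \<noteq> x i then 1 else 0)"
    unfolding tensor_pow_def by (rule prod01) (simp add: sigma_x_def)
  moreover have "(\<forall>i<n. y i \<noteq> x i) \<longleftrightarrow> y = comp {..<n} x"
    using assms by (auto simp: asg_def comp_def fun_eq_iff)
  ultimately show ?thesis by (simp add: M_X_def)
qed

lemma trace_Z:
  "trace_prod n \<rho> (M_Z n) = \<rho> zer zer + \<rho> (ones {..<n}) (ones {..<n})"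
proof -
  let ?N = "{..<n}"
  have fN: "finite (asg ?N)" by (simp add: finite_asg)
  have "trace_prod n \<rho> (M_Z n) = (\<Sum>x\<in>asg ?N. (if x = zer then \<rho> x zer else 0) + (if x = ones ?N then \<rho> x (ones ?N) else 0))"
    unfolding trace_prod_def
  proof (rule sum.cong[OF refl])
    fix x assume x: "x \<in> asg ?N"
    have "(\<Sum>y\<in>asg ?N. \<rho> x y * M_Z n y x) = (\<Sum>y\<in>asg ?N. (if y = zer then (if x = zer then \<rho> x y else 0) else 0) + (if y = ones ?N then (if x = ones ?N then \<rho> x y else 0) else 0))"
      by (rule sum.cong[OF refl]) (simp add: MZ_val[OF x])
    also have "\<dots> = (if x = zer then \<rho> x zer else 0) + (if x = ones ?N then \<rho> x (ones ?N) else 0)"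
      by (simp add: sum.distrib fN)
    finally show "(\<Sum>y\<in>asg ?N. \<rho> x y * M_Z n y x) = (if x = zer then \<rho> x zer else 0) + (if x = ones ?N then \<rho> x (ones ?N) else 0)" .
  qed
  also have "\<dots> = \<rho> zer zer + \<rho> (ones ?N) (ones ?N)" by (simp add: sum.distrib fN)
  finally show ?thesis .
qed

lemma trace_X:
  "trace_prod n \<rho> (M_X n) = (\<Sum>x\<in>asg {..<n}. \<rho> x (comp {..<n} x))"
  unfolding trace_prod_def
proof (rule sum.cong[OF refl])
  let ?N = "{..<n}"
  have fN: "finite (asg ?N)" by (simp add: finite_asg)
  fix x assume x: "x \<in> asg ?N"
  have "(\<Sum>y\<in>asg ?N. \<rho> x y * M_X n y x) = (\<Sum>y\<in>asg ?N. if y = comp ?N x then \<rho> x y else 0)"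
    by (rule sum.cong[OF refl]) (simp add: MX_val[OF x])
  also have "\<dots> = \<rho> x (comp ?N x)" by (simp add: fN)
  finally show "(\<Sum>y\<in>asg ?N. \<rho> x y * M_X n y x) = \<rho> x (comp ?N x)" .
qed

theorem theorem1:
  fixes n :: nat and \<alpha> :: real and s :: real
    and \<rho> :: "(nat \<Rightarrow> bool) \<Rightarrow> (nat \<Rightarrow> bool) \<Rightarrow> complex"
  assumes "n \<ge> 2" and "0 < \<alpha>" and "\<alpha> \<le> 2" and "s = 1 \<or> s = -1"
    and "biseparable n \<rho>"
  shows "\<alpha> * Re (trace_prod n \<rho> (M_Z n)) + s * Re (trace_prod n \<rho> (M_X n)) \<le> \<alpha> / 2 + 1"
proof -
  let ?N = "{..<n}"
  obtain m p \<psi> where p0: "\<forall>k<(m::nat). p k \<ge> 0" and p1: "(\<Sum>k<m. p k) = 1"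
    and bp: "\<forall>k<m. biseparable_pure n (\<psi> k)"
    and r: "\<forall>x\<in>asg ?N. \<forall>y\<in>asg ?N. \<rho> x y = (\<Sum>k<m. complex_of_real (p k) * \<psi> k x * cnj (\<psi> k y))"
    using assms(5) unfolding biseparable_def by blast
  define Z where "Z k = (cmod (\<psi> k zer))\<^sup>2 + (cmod (\<psi> k (ones ?N)))\<^sup>2" for k
  define X where "X k = Re(\<Sum>x\<in>asg ?N. \<psi> k x * cnj (\<psi> k (comp ?N x)))" for k
  have sq: "Re (w * cnj w) = (cmod w)\<^sup>2" for w :: complex
    using complex_norm_square[of w] by (metis Re_complex_of_real)
  have rm: "Re (complex_of_real r * w) = r * Re w" for r w by simp
  have RZ: "Re (trace_prod n \<rho> (M_Z n)) = (\<Sum>k<m. p k * Z k)"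
  proof -
    have "\<rho> zer zer + \<rho> (ones ?N) (ones ?N) = (\<Sum>k<m. complex_of_real (p k) * (\<psi> k zer * cnj (\<psi> k zer)) + complex_of_real (p k) * (\<psi> k (ones ?N) * cnj (\<psi> k (ones ?N))))"
      using r by (simp add: sum.distrib mult.assoc)
    also have "Re \<dots> = (\<Sum>k<m. p k * Z k)"
      unfolding Re_sum by (rule sum.cong[OF refl]) (simp only: plus_complex.sel rm sq Z_def distrib_left)
    finally show ?thesis unfolding trace_Z .
  qed
  have RX: "Re (trace_prod n \<rho> (M_X n)) = (\<Sum>k<m. p k * X k)"
  proof -
    have "trace_prod n \<rho> (M_X n) = (\<Sum>x\<in>asg ?N. \<Sum>k<m. complex_of_real (p k) * (\<psi> k x * cnj (\<psi> k (comp ?N x))))"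
      unfolding trace_X by (rule sum.cong[OF refl]) (simp add: r mult.assoc)
    also have "\<dots> = (\<Sum>k<m. complex_of_real (p k) * (\<Sum>x\<in>asg ?N. \<psi> k x * cnj (\<psi> k (comp ?N x))))"
      by (simp add: sum.swap[of _ "asg ?N"] sum_distrib_left)
    finally show ?thesis by (simp add: Re_sum X_def)
  qed
  have "\<alpha> * (\<Sum>k<m. p k * Z k) + s * (\<Sum>k<m. p k * X k) = (\<Sum>k<m. p k * (\<alpha> * Z k + s * X k))"
    by (simp add: sum_distrib_left sum.distrib algebra_simps)
  also have "\<dots> \<le> (\<Sum>k<m. p k * (\<alpha>/2+1))"
  proof (rule sum_mono)
    fix k assume "k \<in> {..<m}"
    then have "p k \<ge> 0" "\<alpha> * Z k + s * X k \<le> \<alpha>/2+1"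
      using p0 pure_bound[of n "\<psi> k" \<alpha> s] bp assms unfolding Z_def X_def by auto
    then show "p k * (\<alpha> * Z k + s * X k) \<le> p k * (\<alpha>/2+1)" by (rule mult_left_mono[rotated])
  qed
  also have "\<dots> = \<alpha>/2+1" using p1 by (simp add: sum_distrib_right[symmetric])
  finally show ?thesis unfolding RZ RX .
qed

end
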